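(* Let $n>2$ and $q>0$ be integers such that $n$ is even or $q$ is odd, and let $p>\max\{n,(q-1)n+1\}$ be a prime. Then $$ \sum_{k=0}^{p-q}\frac{(q)_k^n}{(1)_k^n}H_{q-1}^{(2)}\equiv\sum_{k=0}^{p-q}\frac{(q)_k^n}{(1)_k^n}H_{q+k-1}^{(2)}\equiv\sum_{k=0}^{p-q}\frac{(q)_k^n}{(1)_k^n}H_k^{(2)}\equiv0\pmod{p}. $$
   Context: $(x)_k$ denotes the Pochhammer symbol: $(x)_0=1$ and $(x)_k=x(x+1)\cdots(x+k-1)$ for $k>0$. $H_k^{(m)}=\sum_{j=1}^k 1/j^m$ is the $k$th harmonic number of order $m$ (with $H_0^{(m)}=0$). A congruence between rational numbers modulo $p^m$ means their difference lies in $p^m\mathbb{Z}_{(p)}$, where $\mathbb{Z}_{(p)}$ is the ring of rationals whose denominators are coprime to $p$. *)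

theory Defs
  imports Complex_Main "HOL-Computational_Algebra.Primes"
begin

definition harm_ord :: "nat \<Rightarrow> nat \<Rightarrow> rat" where
  "harm_ord m k = (\<Sum>j=1..k. 1 / (of_nat j) ^ m)"

text \<open>Congruence of rationals modulo an integer M: the difference lies in M * Z_(M),
  i.e. writing x - y = a/b in lowest terms (b > 0), M divides a and b is coprime to M.
  For M = p^m with p prime this is exactly x - y in p^m Z_(p).\<close>
definition rat_cong :: "rat \<Rightarrow> rat \<Rightarrow> int \<Rightarrow> bool" where
  "rat_cong x y M = (let (a, b) = quotient_of (x - y) in M dvd a \<and> coprime b M)"

end

theory Submission
  imports Defs "HOL-Number_Theory.Number_Theory" "HOL-Computational_Algebra.Polynomial"
begin


definition pz :: "nat \<Rightarrow> rat \<Rightarrow> bool" where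
  "pz p x \<longleftrightarrow> (\<exists>a b::int. x = of_int a / of_int b \<and> int p dvd a \<and> \<not> int p dvd b)"

definition pint :: "nat \<Rightarrow> rat \<Rightarrow> bool" where
  "pint p x \<longleftrightarrow> (\<exists>a b::int. x = of_int a / of_int b \<and> \<not> int p dvd b)"

lemma pz_rat_cong:
  assumes p: "prime p" and "pz p x" shows "rat_cong x 0 (int p)"
proof -
  obtain a b where x: "x = of_int a / of_int b" and pa: "int p dvd a" and pb: "\<not> int p dvd b"
    using assms(2) unfolding pz_def by blast
  have b0: "b \<noteq> 0" using pb by auto
  obtain a' b' where q: "quotient_of x = (a', b')" by (cases "quotient_of x") auto
  have x': "x = of_int a' / of_int b'" and b'0: "b' > 0" and cop: "coprime a' b'"
    using q quotient_of_div quotient_of_denom_pos quotient_of_coprime by blast+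
  have "of_int a / of_int b = (of_int a' / of_int b' :: rat)" using x x' by simp
  then have "a * b' = a' * b" using b0 b'0
    by (simp add: frac_eq_eq) (metis of_int_eq_iff of_int_mult)
  then have "int p dvd a' * b" using pa by (metis dvd_mult2)
  moreover have pp: "prime (int p)" using p by simp
  ultimately have pa': "int p dvd a'" using pb prime_dvd_mult_iff by blast
  have "\<not> int p dvd b'"
  proof
    assume "int p dvd b'"
    then have "int p dvd gcd a' b'" using pa' by simp
    then show False using cop pp by (simp add: not_prime_unit)
  qed
  then have "coprime (int p) b'" using pp by (simp add: prime_imp_coprime)
  then have "coprime b' (int p)" by (simp add: coprime_commute)
  then show ?thesis unfolding rat_cong_def using q pa' by simp
qed

lemma pz_int: "prime p \<Longrightarrow> int p dvd a \<Longrightarrow> pz p (of_int a)"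
  unfolding pz_def by (rule exI[of _ a], rule exI[of _ 1]) (auto simp: prime_gt_1_nat)

lemma pint_int: "prime p \<Longrightarrow> pint p (of_int a)"
  unfolding pint_def by (rule exI[of _ a], rule exI[of _ 1]) (auto)

lemma pint_inv: "\<not> int p dvd b \<Longrightarrow> pint p (1 / of_int b)"
  unfolding pint_def by (rule exI[of _ 1], rule exI[of _ b]) auto

lemma pz_add: assumes p: "prime p" and "pz p x" "pz p y" shows "pz p (x + y)"
proof -
  obtain a b where x: "x = of_int a / of_int b" and pa: "int p dvd a" and pb: "\<not> int p dvd b"
    using assms(2) unfolding pz_def by blast
  obtain c d where y: "y = of_int c / of_int d" and pc: "int p dvd c" and pd: "\<not> int p dvd d"
    using assms(3) unfolding pz_def by blast
  have b0: "b \<noteq> 0" "d \<noteq> 0" using pb pd by auto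
  have "x + y = of_int (a*d + c*b) / of_int (b*d)" using x y b0 by (simp add: field_simps)
  moreover have "int p dvd a*d + c*b" using pa pc by simp
  moreover have "\<not> int p dvd b*d" using pb pd p by (simp add: prime_dvd_mult_iff)
  ultimately show ?thesis unfolding pz_def by blast
qed

lemma pz_neg: "pz p x \<Longrightarrow> pz p (- x)"
  unfolding pz_def by (metis dvd_minus_iff minus_divide_left of_int_minus)

lemma pz_diff: "prime p \<Longrightarrow> pz p x \<Longrightarrow> pz p y \<Longrightarrow> pz p (x - y)"
  using pz_add[of p x "-y"] pz_neg by simp

lemma pz_zero: "prime p \<Longrightarrow> pz p 0" using pz_int[of p 0] by simp

lemma pz_sum: "prime p \<Longrightarrow> (\<And>i. i \<in> A \<Longrightarrow> pz p (f i)) \<Longrightarrow> pz p (\<Sum>i\<in>A. f i)"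
  by (induction A rule: infinite_finite_induct) (auto simp: pz_zero pz_add)

lemma pz_mult: assumes p: "prime p" and "pint p x" "pz p y" shows "pz p (x * y)"
proof -
  obtain a b where x: "x = of_int a / of_int b" and pb: "\<not> int p dvd b"
    using assms(2) unfolding pint_def by blast
  obtain c d where y: "y = of_int c / of_int d" and pc: "int p dvd c" and pd: "\<not> int p dvd d"
    using assms(3) unfolding pz_def by blast
  have "x * y = of_int (a*c) / of_int (b*d)" using x y by simp
  moreover have "int p dvd a*c" using pc by simp
  moreover have "\<not> int p dvd b*d" using pb pd p by (simp add: prime_dvd_mult_iff)
  ultimately show ?thesis unfolding pz_def by blast
qed




lemma powsum:
  assumes p: "prime p" shows "e < p - 1 \<Longrightarrow> int p dvd (\<Sum>k<p. (int k)^e)"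
proof (induction e rule: less_induct)
  case (less e)
  define S where "S i = (\<Sum>k<p. (int k)^i)" for i
  have each: "int (Suc k)^(Suc e) - int k^(Suc e) = (\<Sum>i<Suc e. of_nat (Suc e choose i) * int k ^ i)" for k
  proof -
    have "int (Suc k)^(Suc e) = (int k + 1)^(Suc e)" by (simp add: add.commute)
    also have "\<dots> = (\<Sum>i\<le>Suc e. of_nat (Suc e choose i) * int k ^ i)"
      using binomial_ring[of "int k" 1 "Suc e"] by simp
    also have "\<dots> = (\<Sum>i<Suc e. of_nat (Suc e choose i) * int k ^ i) + int k ^ Suc e"
      by (simp add: sum.atMost_Suc lessThan_Suc_atMost[symmetric] del: power_Suc)
    finally show ?thesis by simp
  qed
  have "int p ^ Suc e = (\<Sum>k<p. int (Suc k)^(Suc e) - int k^(Suc e))"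
    using sum_lessThan_telescope[of "\<lambda>k. int k ^ Suc e" p] by simp
  also have "\<dots> = (\<Sum>k<p. \<Sum>i<Suc e. of_nat (Suc e choose i) * int k ^ i)"
    using each by simp
  also have "\<dots> = (\<Sum>i<Suc e. of_nat (Suc e choose i) * S i)"
    unfolding S_def by (subst sum.swap) (simp add: sum_distrib_left)
  also have "\<dots> = (\<Sum>i<e. of_nat (Suc e choose i) * S i) + of_nat (Suc e) * S e"
    by simp
  finally have eq: "int p ^ Suc e = (\<Sum>i<e. of_nat (Suc e choose i) * S i) + of_nat (Suc e) * S e" .
  have "int p dvd (\<Sum>i<e. of_nat (Suc e choose i) * S i)"
    using less by (intro dvd_sum) (auto simp: S_def)
  moreover have "int p dvd int p ^ Suc e" by simp
  ultimately have "int p dvd of_nat (Suc e) * S e" using eq by (metis dvd_add_right_iff)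
  moreover have "\<not> int p dvd of_nat (Suc e)"
  proof
    assume "int p dvd of_nat (Suc e)"
    then have "p dvd Suc e" by (metis int_dvd_int_iff of_nat_Suc)
    then have "p \<le> Suc e" by (simp add: dvd_imp_le)
    then show False using less.prems by simp
  qed
  ultimately show ?case using p by (simp add: S_def prime_dvd_mult_iff)
qed

lemma polysum:
  assumes p: "prime p" and d: "degree F < p - 1"
  shows "int p dvd (\<Sum>k<p. poly F (int k))"
proof -
  have "(\<Sum>k<p. poly F (int k)) = (\<Sum>i\<le>degree F. coeff F i * (\<Sum>k<p. (int k)^i))"
    by (simp add: poly_altdef sum_distrib_left) (rule sum.swap)
  also have "int p dvd \<dots>"
    using d powsum[OF p] by (intro dvd_sum) auto
  finally show ?thesis .
qed

lemma lemZ: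
  assumes p: "prime p" and m: "m < p" and es: "(\<Sum>l=1..m. e l) < p - 1"
    and e1: "\<And>l. l \<in> {1..m} \<Longrightarrow> e l \<ge> 1"
  shows "int p dvd (\<Sum>k=0..p-1-m. \<Prod>l=1..m. (int k + int l)^(e l))"
proof -
  define F where "F = (\<Prod>l\<in>{1..m}. [:int l, 1:]^(e l))"
  have pF: "poly F x = (\<Prod>l=1..m. (x + int l)^(e l))" for x
    unfolding F_def by (simp add: poly_prod add.commute)
  have "degree F \<le> (\<Sum>l=1..m. degree ([:int l, 1:]^(e l)))"
    unfolding F_def using degree_prod_sum_le[of "{1..m}"] by (simp add: o_def)
  also have "\<dots> \<le> (\<Sum>l=1..m. e l)"
  proof (intro sum_mono)
    fix l show "degree ([:int l, 1:]^(e l)) \<le> e l"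
      using degree_power_le[of "[:int l, 1:]" "e l"] by simp
  qed
  finally have "degree F < p - 1" using es by simp
  then have all: "int p dvd (\<Sum>k<p. poly F (int k))" using polysum[OF p] by simp
  have split: "(\<Sum>k<p. poly F (int k)) = (\<Sum>k=0..<p-m. poly F (int k)) + (\<Sum>k=p-m..<p. poly F (int k))"
    by (subst sum.atLeastLessThan_concat) (auto simp: atLeast0LessThan)
  have "int p dvd (\<Sum>k=p-m..<p. poly F (int k))"
  proof (intro dvd_sum)
    fix k assume k: "k \<in> {p-m..<p}"
    define l where "l = p - k"
    have l: "l \<in> {1..m}" using k m unfolding l_def by auto
    have "int p dvd (int k + int l)^(e l)" using l e1[OF l] k unfolding l_def
      by (simp add: of_nat_diff)
    also have "\<dots> dvd poly F (int k)" unfolding pF using l by (intro dvd_prodI) auto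
    finally show "int p dvd poly F (int k)" .
  qed
  then have "int p dvd (\<Sum>k=0..<p-m. poly F (int k))" using all split by (metis dvd_add_left_iff)
  moreover have "{0..<p-m} = {0..p-1-m}" using m by auto
  ultimately show ?thesis by (simp add: pF)
qed




definition hh :: "nat \<Rightarrow> nat \<Rightarrow> int" where
  "hh p j = (\<Sum>i=1..j. (int i)^(p-3))"

definition aa :: "nat \<Rightarrow> nat \<Rightarrow> int" where
  "aa m k = (\<Prod>l=1..m. (int k + int l))"

lemma hh_Suc: "hh p (Suc j) = hh p j + int (Suc j)^(p-3)"
  unfolding hh_def by simp

lemma H0: assumes p: "prime p" and p5: "p \<ge> 5" shows "int p dvd hh p (p-1)"
proof -
  have "{..<p} = insert 0 {1..p-1}" using p5 by auto
  then have "(\<Sum>k<p. (int k)^(p-3)) = hh p (p-1)" unfolding hh_def using p5 by simp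
  moreover have "int p dvd (\<Sum>k<p. (int k)^(p-3))" using powsum[OF p] p5 by simp
  ultimately show ?thesis by simp
qed

lemma Hrev: assumes p: "prime p" and p5: "p \<ge> 5"
  shows "j \<le> p - 1 \<Longrightarrow> [hh p (p-1-j) = - hh p j] (mod int p)"
proof (induction j)
  case 0
  then show ?case using H0[OF p p5] by (simp add: hh_def cong_0_iff)
next
  case (Suc j)
  have odd: "odd p" using p p5 prime_odd_nat by simp
  then have ev: "even (p-3)" using p5 by simp
  have IH: "[hh p (p-1-j) = - hh p j] (mod int p)" using Suc by simp
  have e1: "hh p (p-1-j) = hh p (p-1-Suc j) + int (p-1-j)^(p-3)"
    using hh_Suc[of p "p-1-Suc j"] Suc.prems by (simp add: Suc_diff_Suc)
  have "[int (p-1-j) = - int (Suc j)] (mod int p)"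
    using Suc.prems by (simp add: cong_iff_dvd_diff of_nat_diff)
  then have "[int (p-1-j)^(p-3) = (- int (Suc j))^(p-3)] (mod int p)" by (rule cong_pow)
  moreover have "(- int (Suc j))^(p-3) = int (Suc j)^(p-3)" using ev by (rule power_minus_even)
  ultimately have c2: "[int (p-1-j)^(p-3) = int (Suc j)^(p-3)] (mod int p)" by simp
  have "[hh p (p-1-j) - int (p-1-j)^(p-3) = - hh p j - int (Suc j)^(p-3)] (mod int p)"
    using IH c2 by (rule cong_diff)
  then show ?case using e1 hh_Suc[of p j] by (simp add: algebra_simps)
qed

lemma prod_neg: "(\<Prod>l\<in>A. - (f l :: int)) = (-1)^card A * (\<Prod>l\<in>A. f l)"
  by (induction A rule: infinite_finite_induct) auto

lemma Arev: assumes m: "m < p" and k: "k \<le> p - 1 - m"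
  shows "[aa m (p-1-m-k) = (-1)^m * aa m k] (mod int p)"
proof -
  have "aa m (p-1-m-k) = (\<Prod>l=1..m. (int (p-1-m-k) + int (m + 1 - l)))"
    unfolding aa_def by (subst prod.atLeastAtMost_rev) simp
  also have "\<dots> = (\<Prod>l=1..m. int p - (int k + int l))"
    using m k by (intro prod.cong) (auto simp: of_nat_diff)
  also have "[\<dots> = (\<Prod>l=1..m. - (int k + int l))] (mod int p)"
    by (intro cong_prod) (simp add: cong_iff_dvd_diff)
  also have "(\<Prod>l=1..m. - (int k + int l)) = (-1)^m * aa m k"
    unfolding aa_def using prod_neg[of "\<lambda>l. int k + int l" "{1..m}"] by simp
  finally show ?thesis .
qed




locale setting =
  fixes p m n :: nat
  assumes p: "prime p" and n3: "n \<ge> 3" and np: "n < p" and mnp: "m * n + 1 < p"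
    and par: "even n \<or> even m"
begin

lemma p5: "p \<ge> 5"
proof -
  have "p \<ge> 4" using n3 np by simp
  moreover have "p \<noteq> 4" using p prime_odd_nat[of 4] by auto
  ultimately show ?thesis by simp
qed

lemma oddp: "odd p" using p p5 prime_odd_nat by simp

lemma mp: "m < p"
proof -
  have "m \<le> m * n" using n3 by simp
  then show ?thesis using mnp by linarith
qed

lemma aa_pow: "aa m k ^ n = (\<Prod>l=1..m. (int k + int l)^n)"
  unfolding aa_def by (simp add: prod_power_distrib)

lemma intA: "int p dvd (\<Sum>k=0..p-1-m. aa m k ^ n)"
  unfolding aa_pow using lemZ[OF p mp, of "\<lambda>_. n"] mnp n3 by simp

lemma dvd_half: "int p dvd 2 * x \<Longrightarrow> int p dvd x"
proof -
  assume "int p dvd 2 * x"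
  moreover have "\<not> int p dvd 2"
  proof
    assume "int p dvd 2"
    then have "p dvd 2" using int_dvd_int_iff[of p 2] by simp
    then have "p \<le> 2" by (simp add: dvd_imp_le)
    then show False using p5 by simp
  qed
  ultimately show ?thesis using p by (simp add: prime_dvd_mult_iff)
qed

lemma Frev: "k \<le> p - 1 - m \<Longrightarrow> [aa m (p-1-m-k) ^ n = aa m k ^ n] (mod int p)"
proof -
  assume k: "k \<le> p - 1 - m"
  have "[aa m (p-1-m-k) ^ n = ((-1)^m * aa m k) ^ n] (mod int p)"
    using Arev[OF mp k] by (rule cong_pow)
  moreover have "((-1)^m * aa m k) ^ n = aa m k ^ n"
  proof -
    have ev: "even (m * n)" using par by auto
    have "((-1::int)^m)^n = (-1)^(m*n)" by (simp only: power_mult)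
    also have "\<dots> = 1" using ev by (rule neg_one_even_power)
    finally have "((-1::int)^m)^n = 1" .
    then show ?thesis by (simp only: power_mult_distrib mult_1)
  qed
  ultimately show ?thesis by simp
qed

lemma intB: "int p dvd (\<Sum>k=0..p-1-m. aa m k ^ n * (hh p (k+m) + hh p k))"
proof -
  define N where "N = p - 1 - m"
  define g where "g k = aa m k ^ n * (hh p (k+m) + hh p k)" for k
  have "(\<Sum>k=0..N. g k) = (\<Sum>k=0..N. g (N - k))"
    by (subst sum.atLeastAtMost_rev) simp
  also have "[\<dots> = (\<Sum>k=0..N. - g k)] (mod int p)"
  proof (intro cong_sum)
    fix k assume "k \<in> {0..N}"
    then have k: "k \<le> p - 1 - m" unfolding N_def by simp
    have c1: "[aa m (N-k) ^ n = aa m k ^ n] (mod int p)" using Frev[OF k] unfolding N_def .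
    have "N - k + m = p - 1 - k" using k mp unfolding N_def by simp
    then have c2: "[hh p (N-k+m) = - hh p k] (mod int p)" using Hrev[OF p p5, of k] k by simp
    have "N - k = p - 1 - (k + m)" unfolding N_def by simp
    then have c3: "[hh p (N-k) = - hh p (k+m)] (mod int p)" using Hrev[OF p p5, of "k+m"] k mp by simp
    have A: "[aa m (N-k)^n * (hh p (N-k+m) + hh p (N-k)) = aa m k ^ n * (- hh p k + - hh p (k+m))] (mod int p)"
      by (rule cong_mult[OF c1 cong_add[OF c2 c3]])
    have B: "aa m k ^ n * (- hh p k + - hh p (k+m)) = - g k"
      unfolding g_def by (simp add: algebra_simps)
    have C: "g (N-k) = aa m (N-k)^n * (hh p (N-k+m) + hh p (N-k))"
      unfolding g_def by (simp only:)
    show "[g (N-k) = - g k] (mod int p)" using A by (simp only: B C[symmetric])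
  qed
  finally have X: "[(\<Sum>k=0..N. g k) = (\<Sum>k=0..N. - g k)] (mod int p)" .
  have "(\<Sum>k=0..N. - g k) = - (\<Sum>k=0..N. g k)" by (rule sum_negf)
  then have "int p dvd (\<Sum>k=0..N. g k) - - (\<Sum>k=0..N. g k)" using X by (simp only: cong_iff_dvd_diff)
  then have "int p dvd 2 * (\<Sum>k=0..N. g k)" by (simp only: diff_minus_eq_add mult_2)
  then have "int p dvd (\<Sum>k=0..N. g k)" by (rule dvd_half)
  then show ?thesis unfolding g_def N_def .
qed

lemma hh_shift: "hh p (k + j) = hh p k + (\<Sum>i=1..j. int (k+i)^(p-3))"
  by (induction j) (simp_all add: hh_Suc algebra_simps)

lemma termC:
  assumes i: "i \<in> {1..m}" and k: "k \<le> p - 1 - m"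
  shows "[aa m k ^ n * int (k+i)^(p-3) = (\<Prod>l=1..m. (int k + int l)^(if l = i then n-2 else n))] (mod int p)"
proof -
  define P where "P = (\<Prod>l\<in>{1..m}-{i}. (int k + int l)^n)"
  define x where "x = int k + int i"
  have a: "aa m k ^ n = x^n * P" unfolding aa_pow P_def x_def using i by (simp add: prod.remove)
  have "(\<Prod>l=1..m. (int k + int l)^(if l = i then n-2 else n)) =
      x^(n-2) * (\<Prod>l\<in>{1..m}-{i}. (int k + int l)^(if l = i then n-2 else n))"
    unfolding x_def using i by (simp add: prod.remove)
  also have "(\<Prod>l\<in>{1..m}-{i}. (int k + int l)^(if l = i then n-2 else n)) = P"
    unfolding P_def by (intro prod.cong) auto
  finally have g: "(\<Prod>l=1..m. (int k + int l)^(if l = i then n-2 else n)) = x^(n-2) * P" .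
  have "n + (p - 3) = (n - 2) + (p - 1)" using n3 p5 by simp
  then have "x^n * x^(p-3) = x^(n-2) * x^(p-1)" by (metis power_add)
  then have lhs: "aa m k ^ n * int (k+i)^(p-3) = x^(n-2) * P * x^(p-1)"
    unfolding a by (simp add: x_def algebra_simps)
  have "\<not> p dvd (k+i)" using i k mp by (auto dest: dvd_imp_le)
  then have "[(k+i)^(p-1) = 1] (mod p)" using fermat_theorem[OF p] by blast
  then have "[x^(p-1) = 1] (mod int p)" unfolding x_def
    by (metis cong_int_iff of_nat_1 of_nat_add of_nat_power)
  then have "[x^(n-2) * P * x^(p-1) = x^(n-2) * P * 1] (mod int p)" by (intro cong_mult cong_refl)
  then show ?thesis using lhs g by simp
qed

lemma intC: "int p dvd (\<Sum>k=0..p-1-m. aa m k ^ n * (hh p (k+m) - hh p k))"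
proof -
  have "(\<Sum>k=0..p-1-m. aa m k ^ n * (hh p (k+m) - hh p k)) =
      (\<Sum>k=0..p-1-m. \<Sum>i=1..m. aa m k ^ n * int (k+i)^(p-3))"
    by (simp add: hh_shift sum_distrib_left)
  also have "\<dots> = (\<Sum>i=1..m. \<Sum>k=0..p-1-m. aa m k ^ n * int (k+i)^(p-3))"
    by (rule sum.swap)
  also have "int p dvd \<dots>"
  proof (rule dvd_sum)
    fix i assume i: "i \<in> {1..m}"
    define e where "e l = (if l = i then n-2 else n)" for l
    have "[(\<Sum>k=0..p-1-m. aa m k ^ n * int (k+i)^(p-3)) =
        (\<Sum>k=0..p-1-m. \<Prod>l=1..m. (int k + int l)^(e l))] (mod int p)"
      unfolding e_def by (intro cong_sum termC[OF i]) auto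
    moreover have "(\<Sum>l=1..m. e l) \<le> m * n"
      using sum_bounded_above[of "{1..m}" e n] by (simp add: e_def)
    then have "int p dvd (\<Sum>k=0..p-1-m. \<Prod>l=1..m. (int k + int l)^(e l))"
      using mnp n3 by (intro lemZ[OF p mp]) (auto simp: e_def)
    ultimately show "int p dvd (\<Sum>k=0..p-1-m. aa m k ^ n * int (k+i)^(p-3))"
      by (simp add: cong_dvd_iff)
  qed
  finally show ?thesis .
qed

lemma intD1: "int p dvd (\<Sum>k=0..p-1-m. aa m k ^ n * hh p (k+m))"
proof -
  have "(\<Sum>k=0..p-1-m. aa m k ^ n * (hh p (k+m) + hh p k)) + (\<Sum>k=0..p-1-m. aa m k ^ n * (hh p (k+m) - hh p k))
     = (\<Sum>k=0..p-1-m. aa m k ^ n * (hh p (k+m) + hh p k) + aa m k ^ n * (hh p (k+m) - hh p k))"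
    by (rule sum.distrib[symmetric])
  also have "\<dots> = (\<Sum>k=0..p-1-m. 2 * (aa m k ^ n * hh p (k+m)))"
    by (intro sum.cong refl) (simp add: algebra_simps)
  also have "\<dots> = 2 * (\<Sum>k=0..p-1-m. aa m k ^ n * hh p (k+m))"
    by (rule sum_distrib_left[symmetric])
  finally have eq: "(\<Sum>k=0..p-1-m. aa m k ^ n * (hh p (k+m) + hh p k)) + (\<Sum>k=0..p-1-m. aa m k ^ n * (hh p (k+m) - hh p k))
     = 2 * (\<Sum>k=0..p-1-m. aa m k ^ n * hh p (k+m))" .
  have "int p dvd (\<Sum>k=0..p-1-m. aa m k ^ n * (hh p (k+m) + hh p k)) + (\<Sum>k=0..p-1-m. aa m k ^ n * (hh p (k+m) - hh p k))"
    by (rule dvd_add[OF intB intC])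
  then have "int p dvd 2 * (\<Sum>k=0..p-1-m. aa m k ^ n * hh p (k+m))" by (simp only: eq)
  then show ?thesis by (rule dvd_half)
qed

lemma intD2: "int p dvd (\<Sum>k=0..p-1-m. aa m k ^ n * hh p k)"
proof -
  have "(\<Sum>k=0..p-1-m. aa m k ^ n * (hh p (k+m) + hh p k)) - (\<Sum>k=0..p-1-m. aa m k ^ n * (hh p (k+m) - hh p k))
     = (\<Sum>k=0..p-1-m. aa m k ^ n * (hh p (k+m) + hh p k) - aa m k ^ n * (hh p (k+m) - hh p k))"
    by (rule sum_subtractf[symmetric])
  also have "\<dots> = (\<Sum>k=0..p-1-m. 2 * (aa m k ^ n * hh p k))"
    by (intro sum.cong refl) (simp add: algebra_simps)
  also have "\<dots> = 2 * (\<Sum>k=0..p-1-m. aa m k ^ n * hh p k)"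
    by (rule sum_distrib_left[symmetric])
  finally have eq: "(\<Sum>k=0..p-1-m. aa m k ^ n * (hh p (k+m) + hh p k)) - (\<Sum>k=0..p-1-m. aa m k ^ n * (hh p (k+m) - hh p k))
     = 2 * (\<Sum>k=0..p-1-m. aa m k ^ n * hh p k)" .
  have "int p dvd (\<Sum>k=0..p-1-m. aa m k ^ n * (hh p (k+m) + hh p k)) - (\<Sum>k=0..p-1-m. aa m k ^ n * (hh p (k+m) - hh p k))"
    by (rule dvd_diff[OF intB intC])
  then have "int p dvd 2 * (\<Sum>k=0..p-1-m. aa m k ^ n * hh p k)" by (simp only: eq)
  then show ?thesis by (rule dvd_half)
qed

end



lemma poch_fact: "pochhammer (of_nat (Suc m) :: rat) k * fact m = fact (m + k)"
proof (induction k)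
  case 0 then show ?case by simp
next
  case (Suc k)
  have "pochhammer (of_nat (Suc m) :: rat) (Suc k) * fact m
      = (pochhammer (of_nat (Suc m)) k * fact m) * of_nat (Suc (m + k))"
    by (simp add: pochhammer_Suc)
  also have "\<dots> = fact (m + Suc k)" using Suc by (simp add: mult.commute)
  finally show ?case .
qed

lemma aa_fact: "aa m k * fact k = fact (k + m)"
proof (induction m)
  case 0 then show ?case by (simp add: aa_def)
next
  case (Suc m)
  have "aa (Suc m) k = aa m k * (int k + int (Suc m))" unfolding aa_def by simp
  then have "aa (Suc m) k * fact k = (aa m k * fact k) * int (Suc (k + m))" by simp
  also have "\<dots> = fact (k + m) * int (Suc (k + m))" using Suc by simp
  also have "\<dots> = fact (k + Suc m)" by (simp add: mult.commute)
  finally show ?case .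
qed

lemma ratio: "pochhammer (of_nat (Suc m) :: rat) k / pochhammer 1 k = of_int (aa m k) / of_nat (fact m)"
proof -
  have "of_int (aa m k) * (fact k :: rat) = fact (k + m)"
    using arg_cong[OF aa_fact[of m k], of "of_int :: int \<Rightarrow> rat"] by simp
  then show ?thesis using poch_fact[of m k]
    by (simp add: pochhammer_fact[symmetric] field_simps add.commute)
qed

lemma harm_hh: assumes p: "prime p" and p5: "p \<ge> 5" and j: "j \<le> p - 1"
  shows "pz p (harm_ord 2 j - of_int (hh p j))"
proof -
  have "harm_ord 2 j - of_int (hh p j) = (\<Sum>i=1..j. 1 / (of_nat i)^2 - of_int (int i ^ (p-3)))"
    unfolding harm_ord_def hh_def by (simp add: sum_subtractf)
  also have "pz p \<dots>"
  proof (rule pz_sum[OF p])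
    fix i assume i: "i \<in> {1..j}"
    have nd: "\<not> p dvd i" using i j by (auto dest: dvd_imp_le)
    have "p - 3 + 2 = p - 1" using p5 by simp
    then have "int i ^ (p-3) * int i ^ 2 = int i ^ (p-1)" by (metis power_add)
    then have eq: "1 / (of_nat i)^2 - of_int (int i ^ (p-3)) = (of_int (1 - int i^(p-1)) / of_int (int i ^ 2) :: rat)"
      using i by (simp add: field_simps) (metis of_int_of_nat_eq of_int_mult of_int_power)
    have "[i^(p-1) = 1] (mod p)" using fermat_theorem[OF p nd] .
    then have "[int i^(p-1) = 1] (mod int p)" by (metis cong_int_iff of_nat_1 of_nat_power)
    then have "int p dvd 1 - int i^(p-1)" by (metis cong_iff_dvd_diff cong_sym)
    moreover have "\<not> int p dvd int i ^ 2"
      using nd p by (metis int_dvd_int_iff of_nat_power prime_dvd_power_nat pos2 prime_dvd_power)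
    ultimately show "pz p (1 / (of_nat i)^2 - of_int (int i ^ (p-3)))" unfolding eq pz_def by blast
  qed
  finally show ?thesis .
qed

lemma pint_int_pow: "prime p \<Longrightarrow> pint p (of_int a ^ k)"
  using pint_int[of p "a ^ k"] by simp

lemma transfer:
  assumes p: "prime p" and p5: "p \<ge> 5" and m: "m < p" and phi: "\<And>k. k \<le> N \<Longrightarrow> phi k \<le> p - 1"
    and d: "int p dvd (\<Sum>k=0..N. aa m k ^ n * hh p (phi k))"
  shows "pz p (\<Sum>k=0..N. (of_int (aa m k) / of_nat (fact m))^n * harm_ord 2 (phi k))"
proof -
  define c where "c = (of_nat (fact m) :: rat)^n"
  define H where "H k = harm_ord 2 (phi k)" for k
  have e1: "(of_int (aa m k) / of_nat (fact m))^n * H k = (1/c) * (of_int (aa m k ^ n) * H k)" for k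
    by (simp add: c_def power_divide)
  have "of_int (\<Sum>k=0..N. aa m k ^ n * hh p (phi k))
        + (\<Sum>k=0..N. of_int (aa m k ^ n) * (H k - of_int (hh p (phi k))))
      = (\<Sum>k=0..N. of_int (aa m k ^ n * hh p (phi k)) + of_int (aa m k ^ n) * (H k - of_int (hh p (phi k))))"
    by (simp only: of_int_sum sum.distrib)
  also have "\<dots> = (\<Sum>k=0..N. of_int (aa m k ^ n) * H k)"
    by (intro sum.cong refl) (simp add: algebra_simps)
  finally have e2: "(\<Sum>k=0..N. of_int (aa m k ^ n) * H k) = of_int (\<Sum>k=0..N. aa m k ^ n * hh p (phi k))
        + (\<Sum>k=0..N. of_int (aa m k ^ n) * (H k - of_int (hh p (phi k))))" by (rule sym)
  have "(\<Sum>k=0..N. (of_int (aa m k) / of_nat (fact m))^n * harm_ord 2 (phi k))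
     = (1 / c) * (of_int (\<Sum>k=0..N. aa m k ^ n * hh p (phi k))
        + (\<Sum>k=0..N. of_int (aa m k ^ n) * (harm_ord 2 (phi k) - of_int (hh p (phi k)))))"
    using e2 unfolding H_def[symmetric] e1 by (simp only: sum_distrib_left[symmetric])
  also have "pz p \<dots>"
  proof (rule pz_mult[OF p])
    have "\<not> p dvd fact m" using prime_dvd_fact_iff[OF p] m by simp
    then have "\<not> p dvd fact m ^ n" using prime_dvd_power[OF p] by blast
    then have "\<not> int p dvd int (fact m ^ n)" by (metis int_dvd_int_iff)
    then show "pint p (1 / c)" unfolding c_def using pint_inv[of p "int (fact m ^ n)"] by simp
    show "pz p (of_int (\<Sum>k=0..N. aa m k ^ n * hh p (phi k))
        + (\<Sum>k=0..N. of_int (aa m k ^ n) * (harm_ord 2 (phi k) - of_int (hh p (phi k)))))"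
    proof (rule pz_add[OF p])
      show "pz p (of_int (\<Sum>k=0..N. aa m k ^ n * hh p (phi k)))" by (rule pz_int[OF p d])
      show "pz p (\<Sum>k=0..N. of_int (aa m k ^ n) * (harm_ord 2 (phi k) - of_int (hh p (phi k))))"
      proof (rule pz_sum[OF p])
        fix k assume "k \<in> {0..N}"
        then have "phi k \<le> p - 1" using phi by simp
        then show "pz p (of_int (aa m k ^ n) * (harm_ord 2 (phi k) - of_int (hh p (phi k))))"
          by (rule pz_mult[OF p pint_int[OF p] harm_hh[OF p p5]])
      qed
    qed
  qed
  finally show ?thesis .
qed




theorem lemma2p2:
  fixes n q p :: nat
  assumes "n > 2" and "q > 0" and "even n \<or> odd q"
    and "prime p" and "p > max n ((q - 1) * n + 1)"
  shows "rat_cong (\<Sum>k=0..p-q. (pochhammer (of_nat q) k / pochhammer 1 k) ^ n * harm_ord 2 (q - 1)) 0 (int p)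
       \<and> rat_cong (\<Sum>k=0..p-q. (pochhammer (of_nat q) k / pochhammer 1 k) ^ n * harm_ord 2 (q + k - 1)) 0 (int p)
       \<and> rat_cong (\<Sum>k=0..p-q. (pochhammer (of_nat q) k / pochhammer 1 k) ^ n * harm_ord 2 k) 0 (int p)"
proof -
  define m where "m = q - 1"
  have q: "q = Suc m" using assms(2) unfolding m_def by simp
  interpret setting p m n
    using assms unfolding q by unfold_locales auto
  have r: "pochhammer (of_nat q) k / pochhammer 1 k = (of_int (aa m k) / of_nat (fact m) :: rat)" for k
    unfolding q using ratio[of m k] by simp
  have N: "p - q = p - 1 - m" unfolding q by simp
  have d1: "int p dvd (\<Sum>k=0..p-1-m. aa m k ^ n * hh p m)"
    using intA by (simp add: sum_distrib_right[symmetric])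
  have t1: "pz p (\<Sum>k=0..p-1-m. (of_int (aa m k) / of_nat (fact m))^n * harm_ord 2 m)"
    by (rule transfer[OF p p5 mp _ d1]) (use mp in simp)
  have t2: "pz p (\<Sum>k=0..p-1-m. (of_int (aa m k) / of_nat (fact m))^n * harm_ord 2 (k + m))"
    by (rule transfer[OF p p5 mp _ intD1]) (use mp in simp)
  have t3: "pz p (\<Sum>k=0..p-1-m. (of_int (aa m k) / of_nat (fact m))^n * harm_ord 2 k)"
    by (rule transfer[OF p p5 mp _ intD2]) (use mp in simp)
  have e2: "q + k - 1 = k + m" for k unfolding q by simp
  show ?thesis unfolding r N e2 using t1 t2 t3 pz_rat_cong[OF p] q by simp
qed


end
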